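(* Let $F$ be a formally real field, $L=F(I)$ with $I^2=-1$, let $\mathfrak k$ be the maximal compact subalgebra of a Kac--Moody algebra over $F$ with simply laced diagram $D$ on vertices $v_1,\dots,v_n$, labelled so that $\{v_1,\dots,v_r\}$ is an inclusion-maximal independent set. Let $\rho:\mathfrak k\to\operatorname{End}_L(V)$, $V=L^{m}$ with $m=2^{n-r}$, be the generalized spin representation obtained by starting with $X_i\mapsto\tfrac12 I\in\operatorname{End}(L^1)$ for $i\le r$ and successively, for $t=r,r+1,\dots,n-1$, extending a generalized spin representation $\rho_t$ of $\mathfrak k_{\le t}$ on $L^{s}$ to $\mathfrak k_{\le t+1}$ on $L^{s}\oplus L^{s}$ by $\rho_{t+1}|_{\mathfrak k_{\le t}}=\rho_t\oplus(\rho_t\circ s_0)$ and $\rho_{t+1}(X_{t+1})=\begin{pmatrix}0&\tfrac12I\,\mathrm{id}_s\\ \tfrac12I\,\mathrm{id}_s&0\end{pmatrix}$, where $s_0(X_i)=-X_i$ if $v_i$ is adjacent to $v_{t+1}$ and $s_0(X_i)=X_i$ otherwise. Then the $F$-Lie algebra $\operatorname{im}(\rho)\subseteq\operatorname{End}_L(V)$ is reductive. If moreover $D$ has no isolated vertices, then $\operatorname{im}(\rho)$ is semisimple.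
   Context: A field is formally real if $-1$ is not a sum of squares. A set of vertices is independent if it spans no edge. $\mathfrak k_{\le t}$ denotes the Lie algebra with generators $X_1,\dots,X_t$ and relations $[X_i,[X_i,X_j]]=-X_j$ for adjacent $v_i,v_j$, $[X_i,X_j]=0$ for non-adjacent $i\ne j$ ($i,j\le t$); for $t=n$ this is $\mathfrak k$ by Berman's theorem ($X_i=e_i-f_i$). A generalized spin representation is a Lie algebra homomorphism $\rho$ into $\operatorname{End}(L^s)$ with $\rho(X_i)^2=-\tfrac14\mathrm{id}_s$ for all generators. *)

theory Defs
  imports "Jordan_Normal_Form.Matrix"
begin

definition subfield_of :: "'a::field set \<Rightarrow> bool" where
  "subfield_of F \<longleftrightarrow> 0 \<in> F \<and> 1 \<in> F \<and>
     (\<forall>x\<in>F. \<forall>y\<in>F. x + y \<in> F \<and> x * y \<in> F) \<and>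
     (\<forall>x\<in>F. - x \<in> F \<and> inverse x \<in> F)"

definition formally_real :: "'a::field set \<Rightarrow> bool" where
  "formally_real F \<longleftrightarrow> (\<forall>xs. set xs \<subseteq> F \<longrightarrow> (\<Sum>x\<leftarrow>xs. x ^ 2) \<noteq> - 1)"

definition mbr :: "'a::comm_ring_1 mat \<Rightarrow> 'a mat \<Rightarrow> 'a mat" where
  "mbr A B = A * B - B * A"

inductive_set fspan :: "'a::comm_ring_1 set \<Rightarrow> nat \<Rightarrow> 'a mat set \<Rightarrow> 'a mat set"
  for F m S where
  zero: "0\<^sub>m m m \<in> fspan F m S"
| base: "x \<in> S \<Longrightarrow> x \<in> fspan F m S"
| add: "x \<in> fspan F m S \<Longrightarrow> y \<in> fspan F m S \<Longrightarrow> x + y \<in> fspan F m S"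
| smult: "c \<in> F \<Longrightarrow> x \<in> fspan F m S \<Longrightarrow> c \<cdot>\<^sub>m x \<in> fspan F m S"

inductive_set lie_gen :: "'a::comm_ring_1 set \<Rightarrow> nat \<Rightarrow> 'a mat set \<Rightarrow> 'a mat set"
  for F m S where
  zero: "0\<^sub>m m m \<in> lie_gen F m S"
| base: "x \<in> S \<Longrightarrow> x \<in> lie_gen F m S"
| add: "x \<in> lie_gen F m S \<Longrightarrow> y \<in> lie_gen F m S \<Longrightarrow> x + y \<in> lie_gen F m S"
| smult: "c \<in> F \<Longrightarrow> x \<in> lie_gen F m S \<Longrightarrow> c \<cdot>\<^sub>m x \<in> lie_gen F m S"
| bracket: "x \<in> lie_gen F m S \<Longrightarrow> y \<in> lie_gen F m S \<Longrightarrow> mbr x y \<in> lie_gen F m S"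

definition lie_subalg :: "'a::comm_ring_1 set \<Rightarrow> nat \<Rightarrow> 'a mat set \<Rightarrow> bool" where
  "lie_subalg F m g \<longleftrightarrow> g \<subseteq> carrier_mat m m \<and> 0\<^sub>m m m \<in> g \<and>
     (\<forall>x\<in>g. \<forall>y\<in>g. x + y \<in> g \<and> mbr x y \<in> g) \<and> (\<forall>c\<in>F. \<forall>x\<in>g. c \<cdot>\<^sub>m x \<in> g)"

definition lie_ideal :: "'a::comm_ring_1 set \<Rightarrow> nat \<Rightarrow> 'a mat set \<Rightarrow> 'a mat set \<Rightarrow> bool" where
  "lie_ideal F m g a \<longleftrightarrow> a \<subseteq> g \<and> 0\<^sub>m m m \<in> a \<and>
     (\<forall>x\<in>a. \<forall>y\<in>a. x + y \<in> a) \<and> (\<forall>c\<in>F. \<forall>x\<in>a. c \<cdot>\<^sub>m x \<in> a) \<and>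
     (\<forall>x\<in>g. \<forall>y\<in>a. mbr x y \<in> a)"

definition derived :: "'a::comm_ring_1 set \<Rightarrow> nat \<Rightarrow> 'a mat set \<Rightarrow> 'a mat set" where
  "derived F m a = fspan F m {mbr x y | x y. x \<in> a \<and> y \<in> a}"

definition lie_solvable :: "'a::comm_ring_1 set \<Rightarrow> nat \<Rightarrow> 'a mat set \<Rightarrow> bool" where
  "lie_solvable F m a \<longleftrightarrow> (\<exists>k. (derived F m ^^ k) a = {0\<^sub>m m m})"

definition lie_center :: "nat \<Rightarrow> 'a::comm_ring_1 mat set \<Rightarrow> 'a mat set" where
  "lie_center m g = {z \<in> g. \<forall>x\<in>g. mbr z x = 0\<^sub>m m m}"

text \<open>Reductive: the radical equals the center, i.e. every solvable ideal lies in the center.\<close>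
definition lie_reductive :: "'a::comm_ring_1 set \<Rightarrow> nat \<Rightarrow> 'a mat set \<Rightarrow> bool" where
  "lie_reductive F m g \<longleftrightarrow> lie_subalg F m g \<and>
     (\<forall>a. lie_ideal F m g a \<and> lie_solvable F m a \<longrightarrow> a \<subseteq> lie_center m g)"

text \<open>Semisimple: the radical is zero, i.e. every solvable ideal is zero.\<close>
definition lie_semisimple :: "'a::comm_ring_1 set \<Rightarrow> nat \<Rightarrow> 'a mat set \<Rightarrow> bool" where
  "lie_semisimple F m g \<longleftrightarrow> lie_subalg F m g \<and>
     (\<forall>a. lie_ideal F m g a \<and> lie_solvable F m a \<longrightarrow> a = {0\<^sub>m m m})"

text \<open>spin adj I r k i is the matrix rho_{r+k}(X_i) (vertices numbered 1..n, generators
  X_1..X_{r+k}), of size 2^k.\<close>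
fun spin :: "(nat \<Rightarrow> nat \<Rightarrow> bool) \<Rightarrow> 'a::field \<Rightarrow> nat \<Rightarrow> nat \<Rightarrow> nat \<Rightarrow> 'a mat" where
  "spin adj I r 0 i = mat 1 1 (\<lambda>_. I / 2)"
| "spin adj I r (Suc k) i =
     (let s = 2 ^ k; t = r + k; A = spin adj I r k i in
      if i = t + 1 then
        four_block_mat (0\<^sub>m s s) ((I / 2) \<cdot>\<^sub>m 1\<^sub>m s) ((I / 2) \<cdot>\<^sub>m 1\<^sub>m s) (0\<^sub>m s s)
      else
        four_block_mat A (0\<^sub>m s s) (0\<^sub>m s s) ((if adj i (t + 1) then - 1 else 1) \<cdot>\<^sub>m A))"

end

theory Submission
  imports Defs
begin


definition T :: "nat \<Rightarrow> 'a::comm_ring_1 mat \<Rightarrow> 'a mat \<Rightarrow> 'a" where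
  "T m A B = (\<Sum>i<m. \<Sum>k<m. A $$ (i,k) * B $$ (k,i))"

lemma mult_idx: "A \<in> carrier_mat m m \<Longrightarrow> B \<in> carrier_mat m m \<Longrightarrow> i < m \<Longrightarrow> j < m \<Longrightarrow>
   (A * B) $$ (i,j) = (\<Sum>k<m. A $$ (i,k) * B $$ (k,j))"
  by (simp add: scalar_prod_def lessThan_atLeast0 mult.commute)

lemma rc_idx: "A \<in> carrier_mat m m \<Longrightarrow> B \<in> carrier_mat m m \<Longrightarrow> i < m \<Longrightarrow> j < m \<Longrightarrow>
   row A i \<bullet> col B j = (\<Sum>k<m. A $$ (i,k) * B $$ (k,j))"
  using mult_idx[of A m B i j] by simp

lemma T_comm: "T m A B = T m B A"
  unfolding T_def by (subst sum.swap) (simp add: mult.commute)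

lemma T_assoc: assumes "A \<in> carrier_mat m m" "B \<in> carrier_mat m m" "C \<in> carrier_mat m m"
  shows "T m A (B * C) = T m (A * B) C"
proof -
  have "T m A (B * C) = (\<Sum>i<m. \<Sum>k<m. \<Sum>l<m. A $$ (i,k) * (B $$ (k,l) * C $$ (l,i)))"
    unfolding T_def using assms by (intro sum.cong refl) (simp add: rc_idx[OF assms(2,3)] sum_distrib_left)
  also have "\<dots> = (\<Sum>i<m. \<Sum>l<m. \<Sum>k<m. A $$ (i,k) * B $$ (k,l) * C $$ (l,i))"
    by (rule sum.cong, simp, subst sum.swap) (simp add: mult.assoc)
  also have "\<dots> = T m (A * B) C"
    unfolding T_def using assms by (intro sum.cong refl) (simp add: rc_idx[OF assms(1,2)] sum_distrib_right)
  finally show ?thesis .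
qed

lemma T_add: "B \<in> carrier_mat m m \<Longrightarrow> C \<in> carrier_mat m m \<Longrightarrow> T m A (B + C) = T m A B + T m A C"
  unfolding T_def by (simp add: distrib_left sum.distrib)

lemma T_minus: "B \<in> carrier_mat m m \<Longrightarrow> C \<in> carrier_mat m m \<Longrightarrow> T m A (B - C) = T m A B - T m A C"
  unfolding T_def by (simp add: right_diff_distrib sum_subtractf)

lemma T_smult: "B \<in> carrier_mat m m \<Longrightarrow> T m A (c \<cdot>\<^sub>m B) = c * T m A B"
  unfolding T_def by (simp add: sum_distrib_left algebra_simps)

lemma T_zero: "T m A (0\<^sub>m m m) = 0"
  unfolding T_def by simp

lemma T_bracket: assumes "Z \<in> carrier_mat m m" "X \<in> carrier_mat m m" "Y \<in> carrier_mat m m"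
  shows "T m Z (mbr X Y) = T m (Z * X) Y - T m (Z * Y) X"
  unfolding mbr_def using assms by (simp add: T_minus T_assoc)

lemma T_bracket_zero1: assumes "Z \<in> carrier_mat m m" "X \<in> carrier_mat m m" "Y \<in> carrier_mat m m"
  and "Z * X = X * Z" shows "T m Z (mbr X Y) = 0"
proof -
  have "T m (Z * Y) X = T m X (Z * Y)" by (rule T_comm)
  also have "\<dots> = T m (X * Z) Y" using assms by (simp add: T_assoc)
  finally show ?thesis using T_bracket[OF assms(1-3)] assms(4) by simp
qed

lemma T_bracket_zero2: assumes "Z \<in> carrier_mat m m" "X \<in> carrier_mat m m" "Y \<in> carrier_mat m m"
  and "Z * Y = Y * Z" shows "T m Z (mbr X Y) = 0"
proof -
  have "T m (Z * X) Y = T m Y (Z * X)" by (rule T_comm)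
  also have "\<dots> = T m (Y * Z) X" using assms by (simp add: T_assoc)
  finally show ?thesis using T_bracket[OF assms(1-3)] assms(4) by simp
qed

lemma jac: fixes x u v :: "'a::comm_ring_1 mat"
  assumes c: "x \<in> carrier_mat m m" "u \<in> carrier_mat m m" "v \<in> carrier_mat m m"
  shows "mbr x (mbr u v) = mbr (mbr x u) v + mbr u (mbr x v)"
  unfolding mbr_def
  using c apply (simp add: mult_minus_distrib_mat[where nr=m and n=m and nc=m] minus_mult_distrib_mat[where nr=m and n=m and nc=m])
  apply (rule eq_matI)
  apply (simp_all add: algebra_simps)
  done
lemma mbr_anti: fixes x u :: "'a::comm_ring_1 mat"
  assumes c: "x \<in> carrier_mat m m" "u \<in> carrier_mat m m"
  shows "mbr x u = - mbr u x"
  unfolding mbr_def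
  using c by (intro eq_matI) auto
lemma mbr_add: fixes x u v :: "'a::comm_ring_1 mat"
  assumes c: "x \<in> carrier_mat m m" "u \<in> carrier_mat m m" "v \<in> carrier_mat m m"
  shows "mbr x (u + v) = mbr x u + mbr x v"
  unfolding mbr_def
  using c apply (simp add: algebra_simps)
  by (intro eq_matI) auto
lemma mbr_smult: fixes x u :: "'a::comm_ring_1 mat"
  assumes c: "x \<in> carrier_mat m m" "u \<in> carrier_mat m m"
  shows "mbr x (c \<cdot>\<^sub>m u) = c \<cdot>\<^sub>m mbr x u"
  unfolding mbr_def
  using c apply (simp add: mult_smult_distrib mult_smult_assoc_mat)
  by (intro eq_matI) (auto simp: algebra_simps)

lemma mbr_zero: fixes x :: "'a::comm_ring_1 mat"
  assumes c: "x \<in> carrier_mat m m"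
  shows "mbr x (0\<^sub>m m m) = 0\<^sub>m m m" "mbr (0\<^sub>m m m) x = 0\<^sub>m m m"
  unfolding mbr_def using c by (auto intro!: eq_matI)

lemma neg_zero_mat: "- 0\<^sub>m m m = (0\<^sub>m m m :: 'a::group_add mat)"
  by (rule eq_matI) auto

lemma comm_of_mbr: fixes x y :: "'a::comm_ring_1 mat"
  assumes cx: "x \<in> carrier_mat m m" and cy: "y \<in> carrier_mat m m" and e: "mbr x y = 0\<^sub>m m m"
  shows "x * y = y * x"
proof (rule eq_matI)
  fix i j assume ij: "i < dim_row (y * x)" "j < dim_col (y * x)"
  have "mbr x y $$ (i,j) = 0" using e ij cx cy by simp
  then show "(x * y) $$ (i,j) = (y * x) $$ (i,j)" unfolding mbr_def using ij cx cy by simp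
qed (use cx cy in auto)

locale cx =
  fixes F :: "'l::field set" and I :: 'l
  assumes sf: "subfield_of F" and fr: "formally_real F" and Isq: "I ^ 2 = - 1"
    and gen: "\<forall>z::'l. \<exists>a\<in>F. \<exists>b\<in>F. z = a + b * I"
begin

lemma F0: "0 \<in> F" and F1: "1 \<in> F"
  and Fadd: "x \<in> F \<Longrightarrow> y \<in> F \<Longrightarrow> x + y \<in> F"
  and Fmult: "x \<in> F \<Longrightarrow> y \<in> F \<Longrightarrow> x * y \<in> F"
  and Fneg: "x \<in> F \<Longrightarrow> - x \<in> F"
  and Finv: "x \<in> F \<Longrightarrow> inverse x \<in> F"
  using sf unfolding subfield_of_def by auto

lemma Fdiff: "x \<in> F \<Longrightarrow> y \<in> F \<Longrightarrow> x - y \<in> F"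
  using Fadd Fneg by (metis diff_conv_add_uminus)

lemma Fdiv: "x \<in> F \<Longrightarrow> y \<in> F \<Longrightarrow> x / y \<in> F"
  using Fmult Finv by (metis divide_inverse)

lemma II: "I * I = - 1" using Isq by (simp add: power2_eq_square)

lemma I_notin: "I \<notin> F"
proof
  assume "I \<in> F"
  then have "set [I] \<subseteq> F" by simp
  then have "(\<Sum>x\<leftarrow>[I]. x ^ 2) \<noteq> - 1" using fr unfolding formally_real_def by blast
  then show False using Isq by simp
qed

lemma uniq: assumes "a \<in> F" "b \<in> F" "c \<in> F" "d \<in> F" "a + b * I = c + d * I"
  shows "a = c \<and> b = d"
proof (cases "b = d")
  case True then show ?thesis using assms(5) by simp
next
  case False
  have "(b - d) * I = c - a" using assms(5) by (simp add: algebra_simps)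
  then have "I = (c - a) / (b - d)" using False by (simp add: field_simps)
  then have "I \<in> F" using Fdiv Fdiff assms by simp
  then show ?thesis using I_notin by simp
qed

definition re :: "'l \<Rightarrow> 'l" where "re z = (SOME a. a \<in> F \<and> (\<exists>b\<in>F. z = a + b * I))"
definition im :: "'l \<Rightarrow> 'l" where "im z = (SOME b. b \<in> F \<and> z = re z + b * I)"

lemma re_ex: "re z \<in> F \<and> (\<exists>b\<in>F. z = re z + b * I)"
  unfolding re_def by (rule someI_ex) (use gen in blast)

lemma re_im: "re z \<in> F" "im z \<in> F" "z = re z + im z * I"
proof -
  have "im z \<in> F \<and> z = re z + im z * I"
    unfolding im_def by (rule someI_ex) (use re_ex in blast)
  then show "re z \<in> F" "im z \<in> F" "z = re z + im z * I" using re_ex by auto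
qed

lemma re_eq: assumes "a \<in> F" "b \<in> F" shows "re (a + b * I) = a" "im (a + b * I) = b"
proof -
  have "re (a + b * I) = a \<and> im (a + b * I) = b"
    by (rule uniq[OF re_im(1) re_im(2) assms]) (metis re_im(3))
  then show "re (a + b * I) = a" "im (a + b * I) = b" by auto
qed

definition cj :: "'l \<Rightarrow> 'l" where "cj z = re z - im z * I"

lemma cj_eq: "a \<in> F \<Longrightarrow> b \<in> F \<Longrightarrow> cj (a + b * I) = a - b * I"
  unfolding cj_def using re_eq by simp

lemma cj_add: "cj (x + y) = cj x + cj y"
proof -
  have "x + y = (re x + re y) + (im x + im y) * I"
    by (subst re_im(3)[of x], subst re_im(3)[of y]) (simp add: algebra_simps)
  then show ?thesis using cj_eq[of "re x + re y" "im x + im y"] re_im Fadd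
    unfolding cj_def[of x] cj_def[of y] by (simp add: algebra_simps)
qed

lemma cj_zero: "cj 0 = 0"
  using cj_eq[OF F0 F0] by simp

lemma cj_neg: "cj (- x) = - cj x"
  using cj_add[of x "- x"] cj_zero by (simp add: eq_neg_iff_add_eq_0 add.commute)

lemma cj_diff: "cj (x - y) = cj x - cj y"
  using cj_add[of x "- y"] cj_neg[of y] by simp

lemma prod_form: "(a + b * I) * (c + d * I) = (a * c - b * d) + (a * d + b * c) * I"
proof -
  have "(a + b * I) * (c + d * I) = a * c + (a * d + b * c) * I + (b * d) * (I * I)"
    by (simp add: algebra_simps)
  then show ?thesis using II by simp
qed

lemma cj_mult: "cj (x * y) = cj x * cj y"
proof -
  have e1: "x * y = (re x * re y - im x * im y) + (re x * im y + im x * re y) * I"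
    using prod_form[of "re x" "im x" "re y" "im y"] re_im(3)[of x] re_im(3)[of y] by simp
  have "cj x * cj y = (re x + (- im x) * I) * (re y + (- im y) * I)"
    unfolding cj_def by simp
  also have "\<dots> = (re x * re y - im x * im y) - (re x * im y + im x * re y) * I"
    by (subst prod_form) (simp add: algebra_simps)
  finally have e2: "cj x * cj y = (re x * re y - im x * im y) - (re x * im y + im x * re y) * I" .
  have F1: "re x * re y - im x * im y \<in> F" "re x * im y + im x * re y \<in> F"
    using re_im Fadd Fmult Fdiff by auto
  show ?thesis unfolding e2 by (subst e1, rule cj_eq[OF F1])
qed

lemma cj_F: "c \<in> F \<Longrightarrow> cj c = c"
  using cj_eq[OF _ F0, of c] by simp

lemma cj_FI: "c \<in> F \<Longrightarrow> cj (c * I) = - (c * I)"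
  using cj_eq[OF F0, of c] by simp

lemma cj_sum: "cj (sum f A) = sum (\<lambda>x. cj (f x)) A"
  by (induction A rule: infinite_finite_induct) (auto simp: cj_zero cj_add)

lemma norm_eq: "z * cj z = re z ^ 2 + im z ^ 2"
proof -
  have "z * cj z = (re z + im z * I) * (re z + (- im z) * I)"
    unfolding cj_def by (subst re_im(3)[of z], simp)
  also have "\<dots> = re z ^ 2 + im z ^ 2"
    by (subst prod_form) (simp add: algebra_simps power2_eq_square)
  finally show ?thesis .
qed

lemma sos_zero:
  assumes fin: "finite P" and inF: "\<forall>p\<in>P. f p \<in> F" and s: "(\<Sum>p\<in>P. f p ^ 2) = 0"
  shows "\<forall>p\<in>P. f p = 0"
proof (rule ccontr)
  assume "\<not> ?thesis"
  then obtain p0 where p0: "p0 \<in> P" "f p0 \<noteq> 0" by auto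
  have "(\<Sum>p\<in>P. f p ^ 2) = f p0 ^ 2 + (\<Sum>p\<in>P - {p0}. f p ^ 2)"
    using fin p0 by (simp add: sum.remove)
  then have e: "(\<Sum>p\<in>P - {p0}. f p ^ 2) = - (f p0 ^ 2)" using s by (simp add: eq_neg_iff_add_eq_0 add.commute)
  have "(\<Sum>p\<in>P - {p0}. (f p / f p0) ^ 2) = (\<Sum>p\<in>P - {p0}. f p ^ 2) / f p0 ^ 2"
    by (simp add: power_divide sum_divide_distrib)
  also have "\<dots> = - 1" using e p0 by simp
  finally have e2: "(\<Sum>p\<in>P - {p0}. (f p / f p0) ^ 2) = - 1" .
  obtain ys where ys: "set ys = P - {p0}" "distinct ys" using fin finite_distinct_list
    by (metis finite_Diff)
  let ?xs = "map (\<lambda>p. f p / f p0) ys"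
  have "set ?xs \<subseteq> F" using ys inF p0 Fdiv by auto
  then have "(\<Sum>x\<leftarrow>?xs. x ^ 2) \<noteq> - 1" using fr unfolding formally_real_def by blast
  moreover have "(\<Sum>x\<leftarrow>?xs. x ^ 2) = (\<Sum>p\<in>P - {p0}. (f p / f p0) ^ 2)"
    using ys by (simp add: o_def sum_list_distinct_conv_sum_set)
  ultimately show False using e2 by simp
qed


definition skh :: "nat \<Rightarrow> 'l mat \<Rightarrow> bool" where
  "skh m z \<longleftrightarrow> z \<in> carrier_mat m m \<and> (\<forall>i<m. \<forall>j<m. cj (z $$ (i,j)) = - z $$ (j,i))"

lemma skh_zero: "skh m (0\<^sub>m m m)"
  unfolding skh_def by (simp add: cj_zero)

lemma skh_add: "skh m x \<Longrightarrow> skh m y \<Longrightarrow> skh m (x + y)"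
  unfolding skh_def by (auto simp: cj_add)

lemma skh_smult: "c \<in> F \<Longrightarrow> skh m x \<Longrightarrow> skh m (c \<cdot>\<^sub>m x)"
  unfolding skh_def by (auto simp: cj_mult cj_F)

lemma skh_mbr: assumes x: "skh m x" and y: "skh m y" shows "skh m (mbr x y)"
proof -
  have cx: "x \<in> carrier_mat m m" and cy: "y \<in> carrier_mat m m" using x y unfolding skh_def by auto
  have ex: "\<And>i j. i < m \<Longrightarrow> j < m \<Longrightarrow> cj (x $$ (i,j)) = - x $$ (j,i)"
    using x unfolding skh_def by blast
  have ey: "\<And>i j. i < m \<Longrightarrow> j < m \<Longrightarrow> cj (y $$ (i,j)) = - y $$ (j,i)"
    using y unfolding skh_def by blast
  have "cj (mbr x y $$ (i,j)) = - mbr x y $$ (j,i)" if ij: "i < m" "j < m" for i j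
  proof -
    have "cj (mbr x y $$ (i,j)) = (\<Sum>k<m. cj (x $$ (i,k)) * cj (y $$ (k,j))) - (\<Sum>k<m. cj (y $$ (i,k)) * cj (x $$ (k,j)))"
      unfolding mbr_def using cx cy ij by (simp add: rc_idx cj_diff cj_sum cj_mult)
    also have "\<dots> = (\<Sum>k<m. y $$ (j,k) * x $$ (k,i)) - (\<Sum>k<m. x $$ (j,k) * y $$ (k,i))"
      using ij by (simp add: ex ey mult.commute)
    also have "\<dots> = - mbr x y $$ (j,i)"
      unfolding mbr_def using cx cy ij by (simp add: rc_idx)
    finally show ?thesis .
  qed
  moreover have "mbr x y \<in> carrier_mat m m" unfolding mbr_def using cx cy by (simp add: minus_carrier_mat)
  ultimately show ?thesis unfolding skh_def by auto
qed

lemma skh_pos: assumes z: "skh m z" and t: "T m z z = 0" shows "z = 0\<^sub>m m m"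
proof -
  have cz: "z \<in> carrier_mat m m" using z unfolding skh_def by auto
  let ?P = "{..<m} \<times> {..<m}"
  define f where "f = case_sum (\<lambda>(i,k). re (z $$ (i,k))) (\<lambda>(i,k). im (z $$ (i,k)))"
  have "T m z z = (\<Sum>i<m. \<Sum>k<m. - (z $$ (i,k) * cj (z $$ (i,k))))"
    unfolding T_def using z unfolding skh_def by (intro sum.cong refl) auto
  also have "\<dots> = (\<Sum>p\<in>?P. - (re (z $$ p) ^ 2 + im (z $$ p) ^ 2))"
    by (simp add: norm_eq sum.cartesian_product split_def)
  also have "\<dots> = - (\<Sum>p\<in>?P. re (z $$ p) ^ 2 + im (z $$ p) ^ 2)"
    by (rule sum_negf)
  also have "(\<Sum>p\<in>?P. re (z $$ p) ^ 2 + im (z $$ p) ^ 2) = (\<Sum>p\<in>?P <+> ?P. f p ^ 2)"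
    unfolding f_def by (simp add: sum.Plus sum.distrib split_def)
  finally have s: "(\<Sum>p\<in>?P <+> ?P. f p ^ 2) = 0" using t by simp
  have inF: "\<forall>p\<in>?P <+> ?P. f p \<in> F" unfolding f_def using re_im by (auto split: sum.splits)
  have zero: "\<forall>p\<in>?P <+> ?P. f p = 0" by (rule sos_zero[OF _ inF s]) simp
  show ?thesis
  proof (rule eq_matI)
    fix i j assume ij: "i < dim_row (0\<^sub>m m m)" "j < dim_col (0\<^sub>m m m)"
    then have "f (Inl (i,j)) = 0" "f (Inr (i,j)) = 0" using zero by auto
    then have "re (z $$ (i,j)) = 0" "im (z $$ (i,j)) = 0" unfolding f_def by auto
    then show "z $$ (i,j) = 0\<^sub>m m m $$ (i,j)" using ij re_im(3)[of "z $$ (i,j)"] by simp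
  qed (use cz in auto)
qed

end

locale lg = cx F I for F :: "'l::field set" and I :: 'l +
  fixes m :: nat and S :: "'l mat set"
  assumes Sskh: "\<forall>s\<in>S. skh m s"
begin

abbreviation "g \<equiv> lie_gen F m S"

lemma g_skh: "x \<in> g \<Longrightarrow> skh m x"
  by (induction rule: lie_gen.induct) (use Sskh skh_zero skh_add skh_smult skh_mbr in auto)

lemma g_car: "x \<in> g \<Longrightarrow> x \<in> carrier_mat m m"
  using g_skh unfolding skh_def by auto

lemma subalg: "lie_subalg F m g"
  unfolding lie_subalg_def using g_car by (auto intro: lie_gen.intros)

lemma derived_sub: assumes a: "lie_ideal F m g a" shows "derived F m a \<subseteq> g"
proof
  fix x assume "x \<in> derived F m a"
  then show "x \<in> g" unfolding derived_def
  proof (induction rule: fspan.induct)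
    case (base x) then show ?case using a unfolding lie_ideal_def by (auto intro: lie_gen.intros)
  qed (auto intro: lie_gen.intros)
qed

lemma derived_ideal: assumes a: "lie_ideal F m g a" shows "lie_ideal F m g (derived F m a)"
proof -
  have ag: "a \<subseteq> g" using a unfolding lie_ideal_def by auto
  have br: "\<forall>x\<in>g. \<forall>y\<in>a. mbr x y \<in> a" using a unfolding lie_ideal_def by auto
  have "mbr x y \<in> derived F m a" if x: "x \<in> g" and y: "y \<in> derived F m a" for x y
    using y unfolding derived_def
  proof (induction rule: fspan.induct)
    case zero then show ?case using mbr_zero(1)[OF g_car[OF x]] by (auto intro: fspan.intros)
  next
    case (base z)
    then obtain u v where z: "z = mbr u v" "u \<in> a" "v \<in> a" by auto
    have cu: "u \<in> carrier_mat m m" and cv: "v \<in> carrier_mat m m" using z ag g_car by auto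
    have "mbr x z = mbr (mbr x u) v + mbr u (mbr x v)" using jac[OF g_car[OF x] cu cv] z by simp
    moreover have "mbr (mbr x u) v \<in> fspan F m {mbr x y |x y. x \<in> a \<and> y \<in> a}"
      using br x z by (auto intro!: fspan.base)
    moreover have "mbr u (mbr x v) \<in> fspan F m {mbr x y |x y. x \<in> a \<and> y \<in> a}"
      using br x z by (auto intro!: fspan.base)
    ultimately show ?case by (auto intro: fspan.add)
  next
    case (add y1 y2)
    have "y1 \<in> g" "y2 \<in> g" using add(1,2) derived_sub[OF a] unfolding derived_def by auto
    then show ?case using mbr_add[OF g_car[OF x] g_car g_car] add by (auto intro: fspan.add)
  next
    case (smult c y)
    have "y \<in> g" using smult(2) derived_sub[OF a] unfolding derived_def by auto
    then show ?case using mbr_smult[OF g_car[OF x] g_car] smult by (auto intro: fspan.smult)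
  qed
  then show ?thesis using derived_sub[OF a] unfolding lie_ideal_def derived_def
    by (auto intro: fspan.intros)
qed

lemma abelian_central: assumes a: "lie_ideal F m g a" and ab: "\<forall>u\<in>a. \<forall>v\<in>a. mbr u v = 0\<^sub>m m m"
  shows "a \<subseteq> lie_center m g"
proof
  fix y assume y: "y \<in> a"
  have ag: "a \<subseteq> g" and br: "\<forall>x\<in>g. \<forall>y\<in>a. mbr x y \<in> a" using a unfolding lie_ideal_def by blast+
  have yg: "y \<in> g" using ag y by blast
  have "mbr y x = 0\<^sub>m m m" if x: "x \<in> g" for x
  proof -
    let ?z = "mbr x y"
    have za: "?z \<in> a" using br x y by blast
    have zg: "?z \<in> g" using x yg by (rule lie_gen.bracket)
    have "mbr y ?z = 0\<^sub>m m m" using ab y za by blast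
    then have comm: "?z * y = y * ?z"
      using comm_of_mbr[OF g_car[OF yg] g_car[OF zg]] by simp
    have "T m ?z ?z = 0" by (rule T_bracket_zero2[OF g_car[OF zg] g_car[OF x] g_car[OF yg] comm])
    then have "?z = 0\<^sub>m m m" using skh_pos[OF g_skh[OF zg]] by blast
    then show ?thesis using mbr_anti[OF g_car[OF yg] g_car[OF x]] by (simp add: neg_zero_mat)
  qed
  then show "y \<in> lie_center m g" unfolding lie_center_def using yg by blast
qed

lemma derived_central_ab: assumes a: "lie_ideal F m g a" and d: "derived F m a \<subseteq> lie_center m g"
  shows "\<forall>u\<in>a. \<forall>v\<in>a. mbr u v = 0\<^sub>m m m"
proof (intro ballI)
  fix u v assume u: "u \<in> a" and v: "v \<in> a"
  have ug: "u \<in> g" and vg: "v \<in> g" using a u v unfolding lie_ideal_def by auto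
  let ?w = "mbr u v"
  have "?w \<in> derived F m a" unfolding derived_def using u v by (auto intro: fspan.base)
  then have wc: "?w \<in> lie_center m g" using d by auto
  then have wg: "?w \<in> g" and "mbr ?w u = 0\<^sub>m m m" using ug unfolding lie_center_def by auto
  then have comm: "?w * u = u * ?w" using comm_of_mbr[OF g_car[OF wg] g_car[OF ug]] by blast
  have "T m ?w ?w = 0" by (rule T_bracket_zero1[OF g_car[OF wg] g_car[OF ug] g_car[OF vg] comm])
  then show "?w = 0\<^sub>m m m" using skh_pos g_skh[OF wg] by blast
qed

lemma reductive: "lie_reductive F m g"
  unfolding lie_reductive_def
proof (intro conjI subalg allI impI, elim conjE)
  fix a assume a: "lie_ideal F m g a" and sol: "lie_solvable F m a"
  define D where "D j = (derived F m ^^ j) a" for j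
  have Di: "lie_ideal F m g (D j)" for j
    unfolding D_def by (induction j) (auto simp: a derived_ideal)
  obtain k where k: "D k = {0\<^sub>m m m}" using sol unfolding lie_solvable_def D_def by auto
  have "j \<le> k \<longrightarrow> D (k - j) \<subseteq> lie_center m g" for j
  proof (induction j)
    case 0
    have "0\<^sub>m m m \<in> lie_center m g" unfolding lie_center_def
      using mbr_zero(2) g_car by (auto intro: lie_gen.zero)
    then show ?case using k by simp
  next
    case (Suc j)
    show ?case
    proof
      assume sj: "Suc j \<le> k"
      have "D (k - j) = derived F m (D (k - Suc j))"
        unfolding D_def using sj by (metis Suc_diff_Suc Suc_le_lessD funpow.simps(2) o_apply)
      then have "derived F m (D (k - Suc j)) \<subseteq> lie_center m g" using Suc sj by simp
      then show "D (k - Suc j) \<subseteq> lie_center m g"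
        using abelian_central derived_central_ab Di by blast
    qed
  qed
  from this[of k] show "a \<subseteq> lie_center m g" unfolding D_def by simp
qed

lemma center_zero: assumes perf: "\<forall>s\<in>S. \<exists>x\<in>g. \<exists>y\<in>g. s = mbr x y"
  and z: "z \<in> lie_center m g" shows "z = 0\<^sub>m m m"
proof -
  let ?B = "{mbr x y | x y. x \<in> g \<and> y \<in> g}"
  have zg: "z \<in> g" using z unfolding lie_center_def by auto
  have inB: "w \<in> fspan F m ?B" if "w \<in> g" for w
    using that
  proof (induction rule: lie_gen.induct)
    case (base x) then show ?case using perf by (blast intro: fspan.base)
  qed (auto intro: fspan.intros)
  have "T m z w = 0 \<and> w \<in> carrier_mat m m" if "w \<in> fspan F m ?B" for w
    using that
  proof (induction rule: fspan.induct)
    case zero then show ?case by (simp add: T_zero)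
  next
    case (base w)
    then obtain x y where w: "w = mbr x y" "x \<in> g" "y \<in> g" by auto
    have "mbr z x = 0\<^sub>m m m" using z w unfolding lie_center_def by auto
    then have "z * x = x * z" using comm_of_mbr[OF g_car[OF zg] g_car[OF w(2)]] by blast
    then have "T m z w = 0" using T_bracket_zero1[OF g_car[OF zg] g_car g_car] w by blast
    moreover have "w \<in> carrier_mat m m" using w g_car lie_gen.bracket by blast
    ultimately show ?case by simp
  next
    case (add x y) then show ?case by (simp add: T_add)
  next
    case (smult c x) then show ?case by (simp add: T_smult)
  qed
  then have "T m z z = 0" using inB[OF zg] by blast
  then show ?thesis using skh_pos g_skh[OF zg] by blast
qed

lemma semisimple: assumes perf: "\<forall>s\<in>S. \<exists>x\<in>g. \<exists>y\<in>g. s = mbr x y"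
  shows "lie_semisimple F m g"
proof -
  have "a = {0\<^sub>m m m}" if "lie_ideal F m g a" "lie_solvable F m a" for a
  proof -
    have "a \<subseteq> lie_center m g" using reductive that unfolding lie_reductive_def by blast
    then have "a \<subseteq> {0\<^sub>m m m}" using center_zero[OF perf] by blast
    moreover have "0\<^sub>m m m \<in> a" using that unfolding lie_ideal_def by auto
    ultimately show ?thesis by blast
  qed
  then show ?thesis unfolding lie_semisimple_def using subalg by blast
qed

end


lemma m4: fixes A1 :: "'a::semiring_0 mat"
  assumes "A1 \<in> carrier_mat s s" "B1 \<in> carrier_mat s s" "C1 \<in> carrier_mat s s" "D1 \<in> carrier_mat s s"
   "A2 \<in> carrier_mat s s" "B2 \<in> carrier_mat s s" "C2 \<in> carrier_mat s s" "D2 \<in> carrier_mat s s"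
  shows "four_block_mat A1 B1 C1 D1 * four_block_mat A2 B2 C2 D2
  = four_block_mat (A1 * A2 + B1 * C2) (A1 * B2 + B1 * D2) (C1 * A2 + D1 * C2) (C1 * B2 + D1 * D2)"
  by (rule mult_four_block_mat[OF assms])

lemma s4: assumes "A \<in> carrier_mat s s" "B \<in> carrier_mat s s" "C \<in> carrier_mat s s" "D \<in> carrier_mat s s"
  shows "a \<cdot>\<^sub>m four_block_mat A B C D = four_block_mat (a \<cdot>\<^sub>m A) (a \<cdot>\<^sub>m B) (a \<cdot>\<^sub>m C) (a \<cdot>\<^sub>m D)"
  by (rule smult_four_block_mat[OF assms])

lemma sa1: fixes A :: "'a::comm_ring mat"
  shows "A \<in> carrier_mat s s \<Longrightarrow> B \<in> carrier_mat s s \<Longrightarrow> A * (k \<cdot>\<^sub>m B) = k \<cdot>\<^sub>m (A * B)"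
  by (rule mult_smult_distrib)
lemma sa2: fixes A :: "'a::comm_ring mat"
  shows "A \<in> carrier_mat s s \<Longrightarrow> B \<in> carrier_mat s s \<Longrightarrow> (k \<cdot>\<^sub>m A) * B = k \<cdot>\<^sub>m (A * B)"
  by (rule mult_smult_assoc_mat)

context cx begin

lemma spin_car: "spin adj I r k i \<in> carrier_mat (2^k) (2^k)"
  by (induction k) (auto simp: Let_def mult_2)

lemma spin_dim[simp]: "dim_row (spin adj I r k i) = 2^k" "dim_col (spin adj I r k i) = 2^k"
  using spin_car[of adj r k i] by auto

lemma spin_sq: "spin adj I r k i * spin adj I r k i = ((I/2)*(I/2)) \<cdot>\<^sub>m 1\<^sub>m (2^k)"
proof (induction k)
  case 0
  show ?case by (rule eq_matI) (auto simp: scalar_prod_def)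
next
  case (Suc k)
  let ?s = "2^k::nat"
  let ?A = "spin adj I r k i"
  have cA: "?A \<in> carrier_mat ?s ?s" by (rule spin_car)
  have one: "1\<^sub>m (2 ^ Suc k) = four_block_mat (1\<^sub>m ?s) (0\<^sub>m ?s ?s) (0\<^sub>m ?s ?s) (1\<^sub>m ?s)"
    by (simp add: mult_2)
  show ?case
  proof (cases "i = r + k + 1")
    case True
    then show ?thesis
      apply (simp add: Let_def m4[where s="?s"]
          s4[where s="?s"] sa2[where s="?s"]
          sa1[where s="?s"])
      apply (rule eq_matI) apply auto done
  next
    case False
    then show ?thesis
      apply (simp add: Let_def m4[where s="?s"]
          s4[where s="?s"] sa2[where s="?s"]
          sa1[where s="?s"] cA Suc left_mult_zero_mat right_mult_zero_mat)
      apply (intro conjI impI; rule eq_matI) apply auto done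
  qed
qed

lemma spin_anti:
  assumes sym: "\<forall>i j. adj i j \<longrightarrow> adj j i" and irr: "\<forall>i. \<not> adj i i"
    and ind: "\<forall>i\<in>{1..r}. \<forall>j\<in>{1..r}. \<not> adj i j"
  shows "i \<in> {1..r+k} \<Longrightarrow> j \<in> {1..r+k} \<Longrightarrow> adj i j \<Longrightarrow>
    spin adj I r k i * spin adj I r k j = (-1) \<cdot>\<^sub>m (spin adj I r k j * spin adj I r k i)"
proof (induction k arbitrary: i j)
  case 0 then show ?case using ind by auto
next
  case (Suc k)
  let ?s = "2^k::nat"
  have cA: "\<And>i. spin adj I r k i \<in> carrier_mat ?s ?s" by (rule spin_car)
  consider "i = r + k + 1" | "j = r + k + 1" | "i \<le> r + k" "j \<le> r + k" using Suc.prems by force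
  then show ?case
  proof cases
    case 1
    then have j: "j \<noteq> r + k + 1" "adj j (r + k + 1)" using Suc.prems irr sym by auto
    show ?thesis using 1 j
      apply (simp add: Let_def m4[where s="?s"] s4[where s="?s"] sa2[where s="?s"]
          sa1[where s="?s"] cA left_mult_zero_mat right_mult_zero_mat)
      apply (rule eq_matI) apply auto done
  next
    case 2
    then have i: "i \<noteq> r + k + 1" "adj i (r + k + 1)" using Suc.prems irr sym by auto
    show ?thesis using 2 i
      apply (simp add: Let_def m4[where s="?s"] s4[where s="?s"] sa2[where s="?s"]
          sa1[where s="?s"] cA left_mult_zero_mat right_mult_zero_mat)
      apply (rule eq_matI) apply auto done
  next
    case 3
    then have IH: "spin adj I r k i * spin adj I r k j = (-1) \<cdot>\<^sub>m (spin adj I r k j * spin adj I r k i)"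
      using Suc by auto
    show ?thesis using 3
      apply (simp add: Let_def m4[where s="?s"] s4[where s="?s"] sa2[where s="?s"]
          sa1[where s="?s"] cA left_mult_zero_mat right_mult_zero_mat IH)
      apply (intro conjI impI; rule eq_matI) apply auto done
  qed
qed

definition imF :: "'l \<Rightarrow> bool" where "imF x \<longleftrightarrow> (\<exists>c\<in>F. x = c * I)"

lemma imF_0: "imF 0" unfolding imF_def using F0 by (intro bexI[of _ 0]) auto
lemma imF_half: "imF (I / 2)" unfolding imF_def
  using Fdiv[OF F1 Fadd[OF F1 F1]] by (intro bexI[of _ "1/2"]) auto
lemma imF_neg: "imF x \<Longrightarrow> imF (- x)" unfolding imF_def using Fneg by force

lemma spin_good: "a < 2^k \<Longrightarrow> b < 2^k \<Longrightarrow>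
  spin adj I r k i $$ (a,b) = spin adj I r k i $$ (b,a) \<and> imF (spin adj I r k i $$ (a,b))"
proof (induction k arbitrary: a b)
  case 0 then show ?case using imF_half by simp
next
  case (Suc k)
  then show ?case
    by (auto simp: Let_def imF_0 imF_half imF_neg)
qed

lemma spin_skh: "skh (2^k) (spin adj I r k i)"
  unfolding skh_def
proof (intro conjI allI impI spin_car)
  fix a b :: nat assume ab: "a < 2^k" "b < 2^k"
  obtain c where c: "c \<in> F" "spin adj I r k i $$ (a,b) = c * I"
    using spin_good[OF ab] unfolding imF_def by blast
  show "cj (spin adj I r k i $$ (a, b)) = - spin adj I r k i $$ (b, a)"
    using spin_good[OF ab] c cj_FI by simp
qed

lemma four_ne: "(4::'l) \<noteq> 0"
proof
  assume h: "(4::'l) = 0"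
  have "set [1,1,1::'l] \<subseteq> F" using F1 by simp
  then have "(\<Sum>x\<leftarrow>[1,1,1::'l]. x ^ 2) \<noteq> - 1" using fr unfolding formally_real_def by blast
  moreover have "(\<Sum>x\<leftarrow>[1,1,1::'l]. x ^ 2) = 4 - 1" by simp
  ultimately show False using h by simp
qed

lemma gen_bracket:
  assumes cA: "A \<in> carrier_mat m m" and cB: "B \<in> carrier_mat m m"
    and sq: "A * A = ((I/2)*(I/2)) \<cdot>\<^sub>m 1\<^sub>m m" and an: "A * B = (-1) \<cdot>\<^sub>m (B * A)"
  shows "B = mbr ((-1) \<cdot>\<^sub>m A) (mbr A B)"
proof -
  let ?q = "(I/2)*(I/2)"
  have q1: "(?q \<cdot>\<^sub>m 1\<^sub>m m) * B = ?q \<cdot>\<^sub>m B"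
    using mult_smult_assoc_mat[OF one_carrier_mat cB, of ?q] left_mult_one_mat[OF cB] by simp
  have q2: "B * (?q \<cdot>\<^sub>m 1\<^sub>m m) = ?q \<cdot>\<^sub>m B"
    using mult_smult_distrib[OF cB one_carrier_mat, of ?q] right_mult_one_mat[OF cB] by simp
  have P1: "A * (A * B) = ?q \<cdot>\<^sub>m B"
    unfolding assoc_mult_mat[OF cA cA cB, symmetric] sq q1 ..
  have P2: "B * A * A = ?q \<cdot>\<^sub>m B"
    unfolding assoc_mult_mat[OF cB cA cA] sq q2 ..
  have P3: "A * (B * A) = (- ?q) \<cdot>\<^sub>m B"
  proof -
    have "A * (B * A) = (A * B) * A" unfolding assoc_mult_mat[OF cA cB cA] ..
    also have "\<dots> = (-1) \<cdot>\<^sub>m (B * A * A)" unfolding an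
      by (rule mult_smult_assoc_mat) (use cA cB in auto)
    also have "\<dots> = (- ?q) \<cdot>\<^sub>m B" unfolding P2 by (rule eq_matI) auto
    finally show ?thesis .
  qed
  have P4: "A * B * A = (- ?q) \<cdot>\<^sub>m B"
    unfolding assoc_mult_mat[OF cA cB cA] by (rule P3)
  have P2': "B * (A * A) = ?q \<cdot>\<^sub>m B" unfolding sq q2 ..
  have "mbr ((-1) \<cdot>\<^sub>m A) (mbr A B) = B"
    unfolding mbr_def using cA cB
    apply (simp add: mult_minus_distrib_mat[where nr=m and n=m and nc=m]
        minus_mult_distrib_mat[where nr=m and n=m and nc=m] sa1[where s=m] sa2[where s=m] P1 P2' P3 P2 P4)
    apply (rule eq_matI) using II four_ne apply (auto simp: algebra_simps)
    done
  then show ?thesis by simp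
qed

end

theorem mainTheorem11:
  fixes F :: "'l::field set" and I :: 'l
    and adj :: "nat \<Rightarrow> nat \<Rightarrow> bool" and n r :: nat
  assumes F_subfield: "subfield_of F"
    and F_real: "formally_real F"
    and I_sq: "I ^ 2 = - 1"
    and L_gen: "\<forall>z::'l. \<exists>a\<in>F. \<exists>b\<in>F. z = a + b * I"
    and adj_sym: "\<forall>i j. adj i j \<longrightarrow> adj j i"
    and adj_irrefl: "\<forall>i. \<not> adj i i"
    and r_le: "r \<le> n"
    and indep: "\<forall>i\<in>{1..r}. \<forall>j\<in>{1..r}. \<not> adj i j"
    and maximal: "\<forall>j\<in>{r<..n}. \<exists>i\<in>{1..r}. adj i j"
  shows "lie_reductive F (2 ^ (n - r))
           (lie_gen F (2 ^ (n - r)) ((\<lambda>i. spin adj I r (n - r) i) ` {1..n}))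
       \<and> ((\<forall>i\<in>{1..n}. \<exists>j\<in>{1..n}. adj i j) \<longrightarrow>
           lie_semisimple F (2 ^ (n - r))
             (lie_gen F (2 ^ (n - r)) ((\<lambda>i. spin adj I r (n - r) i) ` {1..n})))"
proof -
  interpret cx F I using F_subfield F_real I_sq L_gen by unfold_locales
  let ?m = "2 ^ (n - r) :: nat"
  let ?S = "(\<lambda>i. spin adj I r (n - r) i) ` {1..n}"
  interpret lg F I ?m ?S using spin_skh by unfold_locales blast
  have perf: "\<forall>s\<in>?S. \<exists>x\<in>lie_gen F ?m ?S. \<exists>y\<in>lie_gen F ?m ?S. s = mbr x y"
    if noiso: "\<forall>i\<in>{1..n}. \<exists>j\<in>{1..n}. adj i j"
  proof
    fix s assume "s \<in> ?S"
    then obtain j where j: "j \<in> {1..n}" "s = spin adj I r (n - r) j" by blast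
    obtain i where i: "i \<in> {1..n}" "adj i j" using noiso j adj_sym by blast
    have rn: "r + (n - r) = n" using r_le by simp
    let ?A = "spin adj I r (n - r) i" and ?B = "spin adj I r (n - r) j"
    have an: "?A * ?B = (-1) \<cdot>\<^sub>m (?B * ?A)"
      by (rule spin_anti[OF adj_sym adj_irrefl indep]) (use i j rn in auto)
    have eq: "?B = mbr ((-1) \<cdot>\<^sub>m ?A) (mbr ?A ?B)"
      by (rule gen_bracket[OF spin_car spin_car spin_sq an])
    have Ag: "?A \<in> lie_gen F ?m ?S" using i by (blast intro: lie_gen.base)
    have Bg: "?B \<in> lie_gen F ?m ?S" using j by (blast intro: lie_gen.base)
    have x: "(-1) \<cdot>\<^sub>m ?A \<in> lie_gen F ?m ?S" using Fneg[OF F1] Ag by (blast intro: lie_gen.smult)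
    have y: "mbr ?A ?B \<in> lie_gen F ?m ?S" using Ag Bg by (rule lie_gen.bracket)
    show "\<exists>x\<in>lie_gen F ?m ?S. \<exists>y\<in>lie_gen F ?m ?S. s = mbr x y"
      using x y eq j by blast
  qed
  show ?thesis using reductive semisimple perf by blast
qed


end
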